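(* Let $X$ be a product system over $\mathbb{Z}_+^N$ with coefficients in a C*-algebra $A$ and let $\emptyset\neq F\subseteq[N]$. If $a\in\mathcal{I}_F$ then $\langle \xi, a\eta\rangle\in\mathcal{I}_F$ for all $\xi,\eta\in X_{\underline{m}}$ and all $\underline{m}\in\mathbb{Z}_+^N$ with $\underline{m}\perp F$.
   Context: Notation: $[N]=\{1,\dots,N\}$; $\mathbf{i}$ denotes the $i$-th standard generator of $\mathbb{Z}_+^N$; $\operatorname{supp}\underline{n}=\{i:n_i\neq0\}$; $\underline{m}\perp F$ means $\operatorname{supp}\underline{m}\cap F=\emptyset$; $\underline{1}=(1,\dots,1)$; $\le$ is the coordinatewise order. A product system $X$ over $\mathbb{Z}_+^N$ with coefficients in $A$ is a family $\{X_{\underline{n}}\}$ of C*-correspondences over $A$ (left actions $\phi_{\underline{n}}:A\to\mathcal{L}(X_{\underline{n}})$), $X_{\underline{0}}=A$ with $\phi_{\underline 0}$ left multiplication, with an associative multiplication $X_{\underline{n}}\times X_{\underline{m}}\to X_{\underline{n}+\underline{m}}$, $(\xi,\eta)\mapsto\xi\eta$, inducing unitary equivalences $X_{\underline{n}}\otimes_AX_{\underline{m}}\cong X_{\underline{n}+\underline{m}}$ for $\underline n,\underline m\neq\underline 0$ and given by module actions when one index is $\underline 0$. For $\emptyset\neq F\subseteq[N]$ define the ideals \[\mathcal{J}_F=\Big(\bigcap_{i\in F}\ker\phi_{\mathbf{i}}\Big)^\perp\cap\bigcap_{\underline{n}\le\underline{1}}\phi_{\underline{n}}^{-1}(\mathcal{K}(X_{\underline{n}})),\]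 where $^\perp$ is the annihilator in $A$, and \[\mathcal{I}_F=\{a\in\mathcal{J}_F:\langle\xi,a\eta\rangle\in\mathcal{J}_F \text{ for all }\xi,\eta\in X_{\underline{m}},\ \underline{m}\perp F\}.\] *)

theory Defs
  imports Complex_Main
begin

class cvector = ab_group_add +
  fixes scaleC :: "complex \<Rightarrow> 'a \<Rightarrow> 'a" (infixr "*\<^sub>C" 75)
  assumes scaleC_add_right: "c *\<^sub>C (x + y) = c *\<^sub>C x + c *\<^sub>C y"
    and scaleC_add_left: "(b + c) *\<^sub>C x = b *\<^sub>C x + c *\<^sub>C x"
    and scaleC_scaleC: "b *\<^sub>C (c *\<^sub>C x) = (b * c) *\<^sub>C x"
    and scaleC_one: "1 *\<^sub>C x = x"

class cstar_algebra = real_normed_algebra + banach + cvector +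
  fixes cstar :: "'a \<Rightarrow> 'a"
  assumes scaleR_scaleC: "scaleR r x = complex_of_real r *\<^sub>C x"
    and norm_scaleC: "norm (c *\<^sub>C x) = cmod c * norm x"
    and scaleC_mult_left: "(c *\<^sub>C x) * y = c *\<^sub>C (x * y)"
    and scaleC_mult_right: "x * (c *\<^sub>C y) = c *\<^sub>C (x * y)"
    and cstar_cstar: "cstar (cstar x) = x"
    and cstar_add: "cstar (x + y) = cstar x + cstar y"
    and cstar_scaleC: "cstar (c *\<^sub>C x) = cnj c *\<^sub>C cstar x"
    and cstar_mult: "cstar (x * y) = cstar y * cstar x"
    and cstar_identity: "norm (cstar x * x) = norm x ^ 2"

definition xnorm :: "('x \<Rightarrow> 'x \<Rightarrow> 'a::cstar_algebra) \<Rightarrow> 'x \<Rightarrow> real" where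
  "xnorm inner \<xi> = sqrt (norm (inner \<xi> \<xi>))"

definition hilbert_module ::
  "'x::cvector set \<Rightarrow> ('x \<Rightarrow> 'a::cstar_algebra \<Rightarrow> 'x) \<Rightarrow> ('x \<Rightarrow> 'x \<Rightarrow> 'a) \<Rightarrow> bool" where
  "hilbert_module M ract inner \<longleftrightarrow>
     0 \<in> M \<and>
     (\<forall>x\<in>M. \<forall>y\<in>M. x + y \<in> M) \<and>
     (\<forall>x\<in>M. \<forall>c. c *\<^sub>C x \<in> M) \<and>
     (\<forall>x\<in>M. \<forall>a. ract x a \<in> M) \<and>
     (\<forall>x\<in>M. \<forall>y\<in>M. \<forall>a. ract (x + y) a = ract x a + ract y a) \<and>
     (\<forall>x\<in>M. \<forall>a b. ract x (a + b) = ract x a + ract x b) \<and>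
     (\<forall>x\<in>M. \<forall>a b. ract (ract x a) b = ract x (a * b)) \<and>
     (\<forall>x\<in>M. \<forall>a c. c *\<^sub>C ract x a = ract (c *\<^sub>C x) a \<and> ract x (c *\<^sub>C a) = c *\<^sub>C ract x a) \<and>
     (\<forall>x\<in>M. \<forall>y\<in>M. \<forall>z\<in>M. inner x (y + z) = inner x y + inner x z) \<and>
     (\<forall>x\<in>M. \<forall>y\<in>M. \<forall>c. inner x (c *\<^sub>C y) = c *\<^sub>C inner x y) \<and>
     (\<forall>x\<in>M. \<forall>y\<in>M. \<forall>a. inner x (ract y a) = inner x y * a) \<and>
     (\<forall>x\<in>M. \<forall>y\<in>M. inner y x = cstar (inner x y)) \<and>
     (\<forall>x\<in>M. \<exists>b. inner x x = cstar b * b) \<and>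
     (\<forall>x\<in>M. inner x x = 0 \<longrightarrow> x = 0) \<and>
     (\<forall>s. (\<forall>k. s k \<in> M) \<and>
          (\<forall>\<epsilon>>0. \<exists>K::nat. \<forall>p q. K \<le> p \<and> K \<le> q \<longrightarrow> xnorm inner (s p - s q) < \<epsilon>) \<longrightarrow>
          (\<exists>x\<in>M. \<forall>\<epsilon>>0. \<exists>K::nat. \<forall>p\<ge>K. xnorm inner (s p - x) < \<epsilon>))"

text \<open>A C*-correspondence: a right Hilbert module with a left action given by a
  *-homomorphism into the adjointable operators (the adjoint of phi(a) being phi(a*)).\<close>
definition correspondence ::
  "'x::cvector set \<Rightarrow> ('a::cstar_algebra \<Rightarrow> 'x \<Rightarrow> 'x) \<Rightarrow> ('x \<Rightarrow> 'a \<Rightarrow> 'x) \<Rightarrow> ('x \<Rightarrow> 'x \<Rightarrow> 'a) \<Rightarrow> bool" where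
  "correspondence M lact ract inner \<longleftrightarrow>
     hilbert_module M ract inner \<and>
     (\<forall>a. \<forall>x\<in>M. lact a x \<in> M) \<and>
     (\<forall>a. \<forall>x\<in>M. \<forall>y\<in>M. inner (lact a x) y = inner x (lact (cstar a) y)) \<and>
     (\<forall>a b. \<forall>x\<in>M. lact (a * b) x = lact a (lact b x)) \<and>
     (\<forall>a b. \<forall>x\<in>M. lact (a + b) x = lact a x + lact b x) \<and>
     (\<forall>a c. \<forall>x\<in>M. lact (c *\<^sub>C a) x = c *\<^sub>C lact a x)"

text \<open>Z_+^N is modelled as functions 'i => nat with a finite index type 'i (so [N] = UNIV).
  All fibres X n live in one ambient complex vector space 'x, with global operations
  restricted to the fibres. X_0 is identified with A via the bijection emb.\<close>

definition zvec :: "'i \<Rightarrow> nat" where "zvec = (\<lambda>_. 0)"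

definition gen :: "'i \<Rightarrow> 'i \<Rightarrow> nat" where "gen i = (\<lambda>j. if j = i then 1 else 0)"

definition product_system ::
  "(('i::finite \<Rightarrow> nat) \<Rightarrow> 'x::cvector set) \<Rightarrow> ('a::cstar_algebra \<Rightarrow> 'x) \<Rightarrow>
   ('a \<Rightarrow> 'x \<Rightarrow> 'x) \<Rightarrow> ('x \<Rightarrow> 'a \<Rightarrow> 'x) \<Rightarrow> ('x \<Rightarrow> 'x \<Rightarrow> 'a) \<Rightarrow> ('x \<Rightarrow> 'x \<Rightarrow> 'x) \<Rightarrow> bool" where
  "product_system X emb lact ract inner mult \<longleftrightarrow>
     (\<forall>n. correspondence (X n) lact ract inner) \<and>
     \<comment> \<open>X_0 = A, with phi_0 left multiplication\<close>
     bij_betw emb UNIV (X zvec) \<and>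
     (\<forall>a b. emb (a + b) = emb a + emb b) \<and>
     (\<forall>a c. emb (c *\<^sub>C a) = c *\<^sub>C emb a) \<and>
     (\<forall>a b. ract (emb a) b = emb (a * b)) \<and>
     (\<forall>a b. inner (emb a) (emb b) = cstar a * b) \<and>
     (\<forall>a b. lact a (emb b) = emb (a * b)) \<and>
     \<comment> \<open>multiplication X_n x X_m \<rightarrow> X_(n+m), associative\<close>
     (\<forall>n m. \<forall>\<xi>\<in>X n. \<forall>\<eta>\<in>X m. mult \<xi> \<eta> \<in> X (\<lambda>i. n i + m i)) \<and>
     (\<forall>n m k. \<forall>\<xi>\<in>X n. \<forall>\<eta>\<in>X m. \<forall>\<zeta>\<in>X k. mult (mult \<xi> \<eta>) \<zeta> = mult \<xi> (mult \<eta> \<zeta>)) \<and>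
     \<comment> \<open>given by the module actions when one index is 0\<close>
     (\<forall>m a. \<forall>\<xi>\<in>X m. mult (emb a) \<xi> = lact a \<xi> \<and> mult \<xi> (emb a) = ract \<xi> a) \<and>
     \<comment> \<open>for n, m nonzero: xi (x) eta \<mapsto> xi eta induces a unitary X_n (x)_A X_m \<cong> X_(n+m)\<close>
     (\<forall>n m. n \<noteq> zvec \<and> m \<noteq> zvec \<longrightarrow>
        (\<forall>\<xi>\<in>X n. \<forall>\<xi>'\<in>X n. \<forall>\<eta>\<in>X m. mult (\<xi> + \<xi>') \<eta> = mult \<xi> \<eta> + mult \<xi>' \<eta>) \<and>
        (\<forall>\<xi>\<in>X n. \<forall>\<eta>\<in>X m. \<forall>\<eta>'\<in>X m. mult \<xi> (\<eta> + \<eta>') = mult \<xi> \<eta> + mult \<xi> \<eta>') \<and>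
        (\<forall>\<xi>\<in>X n. \<forall>\<eta>\<in>X m. \<forall>c. mult (c *\<^sub>C \<xi>) \<eta> = c *\<^sub>C mult \<xi> \<eta> \<and> mult \<xi> (c *\<^sub>C \<eta>) = c *\<^sub>C mult \<xi> \<eta>) \<and>
        (\<forall>\<xi>\<in>X n. \<forall>\<eta>\<in>X m. \<forall>a. mult (ract \<xi> a) \<eta> = mult \<xi> (lact a \<eta>)) \<and>
        (\<forall>\<xi>\<in>X n. \<forall>\<eta>\<in>X m. \<forall>a. mult \<xi> (ract \<eta> a) = ract (mult \<xi> \<eta>) a) \<and>
        (\<forall>\<xi>\<in>X n. \<forall>\<eta>\<in>X m. \<forall>a. lact a (mult \<xi> \<eta>) = mult (lact a \<xi>) \<eta>) \<and>
        (\<forall>\<xi>\<in>X n. \<forall>\<xi>'\<in>X n. \<forall>\<eta>\<in>X m. \<forall>\<eta>'\<in>X m.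
            inner (mult \<xi> \<eta>) (mult \<xi>' \<eta>') = inner \<eta> (lact (inner \<xi> \<xi>') \<eta>')) \<and>
        (\<forall>\<zeta>\<in>X (\<lambda>i. n i + m i). \<forall>\<epsilon>>0. \<exists>ps. set ps \<subseteq> X n \<times> X m \<and>
            xnorm inner (\<zeta> - sum_list (map (\<lambda>(\<xi>, \<eta>). mult \<xi> \<eta>) ps)) < \<epsilon>))"

definition annihilator :: "'a::cstar_algebra set \<Rightarrow> 'a set" where
  "annihilator S = {a. \<forall>b\<in>S. a * b = 0}"

definition lker :: "(('i \<Rightarrow> nat) \<Rightarrow> 'x set) \<Rightarrow> ('a \<Rightarrow> 'x \<Rightarrow> 'x::cvector) \<Rightarrow> ('i \<Rightarrow> nat) \<Rightarrow> 'a::cstar_algebra set" where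
  "lker X lact n = {a. \<forall>\<xi>\<in>X n. lact a \<xi> = 0}"

text \<open>T belongs to K(X_n), the closed linear span (in operator norm) of the rank-one
  operators theta_{xi,eta} = xi <eta, _>; complex scalars are absorbed into xi.\<close>
definition compact_op ::
  "(('i \<Rightarrow> nat) \<Rightarrow> 'x::cvector set) \<Rightarrow> ('x \<Rightarrow> 'a::cstar_algebra \<Rightarrow> 'x) \<Rightarrow> ('x \<Rightarrow> 'x \<Rightarrow> 'a) \<Rightarrow>
    ('i \<Rightarrow> nat) \<Rightarrow> ('x \<Rightarrow> 'x) \<Rightarrow> bool" where
  "compact_op X ract inner n T \<longleftrightarrow>
     (\<forall>\<epsilon>>0. \<exists>ps. set ps \<subseteq> X n \<times> X n \<and>
        (\<forall>\<zeta>\<in>X n. xnorm inner (T \<zeta> - sum_list (map (\<lambda>(\<xi>, \<eta>). ract \<xi> (inner \<eta> \<zeta>)) ps))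
                    \<le> \<epsilon> * xnorm inner \<zeta>))"

definition J_ideal ::
  "(('i::finite \<Rightarrow> nat) \<Rightarrow> 'x::cvector set) \<Rightarrow> ('a::cstar_algebra \<Rightarrow> 'x \<Rightarrow> 'x) \<Rightarrow>
   ('x \<Rightarrow> 'a \<Rightarrow> 'x) \<Rightarrow> ('x \<Rightarrow> 'x \<Rightarrow> 'a) \<Rightarrow> 'i set \<Rightarrow> 'a set" where
  "J_ideal X lact ract inner F =
     annihilator (\<Inter>i\<in>F. lker X lact (gen i)) \<inter>
     {a. \<forall>n. (\<forall>i. n i \<le> 1) \<longrightarrow> compact_op X ract inner n (lact a)}"

definition I_ideal ::
  "(('i::finite \<Rightarrow> nat) \<Rightarrow> 'x::cvector set) \<Rightarrow> ('a::cstar_algebra \<Rightarrow> 'x \<Rightarrow> 'x) \<Rightarrow>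
   ('x \<Rightarrow> 'a \<Rightarrow> 'x) \<Rightarrow> ('x \<Rightarrow> 'x \<Rightarrow> 'a) \<Rightarrow> 'i set \<Rightarrow> 'a set" where
  "I_ideal X lact ract inner F =
     {a \<in> J_ideal X lact ract inner F.
        \<forall>m. (\<forall>i\<in>F. m i = 0) \<longrightarrow>
          (\<forall>\<xi>\<in>X m. \<forall>\<eta>\<in>X m. inner \<xi> (lact a \<eta>) \<in> J_ideal X lact ract inner F)}"

end

theory Submission
  imports Defs
begin

lemma scaleC_zero_left': "(0::complex) *\<^sub>C (x::'a::cvector) = 0"
proof -
  have "0 *\<^sub>C x = 0 *\<^sub>C x + 0 *\<^sub>C x" using scaleC_add_left[of 0 0 x] by simp
  thus ?thesis by simp
qed

lemma scaleC_minus_one': "(-1::complex) *\<^sub>C (x::'a::cvector) = - x"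
proof -
  have "(-1::complex) *\<^sub>C x + x = 0"
    using scaleC_add_left[of "-1" 1 x] scaleC_one[of x] scaleC_zero_left'[of x] by simp
  thus ?thesis by (simp add: eq_neg_iff_add_eq_0)
qed


lemma hm_sc:
  assumes "hilbert_module M ract inner"
  shows "\<forall>x\<in>M. \<forall>c. c *\<^sub>C x \<in> M"
  using assms unfolding hilbert_module_def by (elim conjE) assumption

lemma hm_add:
  assumes "hilbert_module M ract inner"
  shows "\<forall>x\<in>M. \<forall>y\<in>M. x + y \<in> M"
  using assms unfolding hilbert_module_def by (elim conjE) assumption

lemma hm_r:
  assumes "hilbert_module M ract inner"
  shows "\<forall>x\<in>M. \<forall>a. ract x a \<in> M"
  using assms unfolding hilbert_module_def by (elim conjE) assumption

lemma hm_iadd: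
  assumes "hilbert_module M ract inner"
  shows "\<forall>x\<in>M. \<forall>y\<in>M. \<forall>z\<in>M. inner x (y + z) = inner x y + inner x z"
  using assms unfolding hilbert_module_def by (elim conjE) assumption

lemma hm_isc:
  assumes "hilbert_module M ract inner"
  shows "\<forall>x\<in>M. \<forall>y\<in>M. \<forall>c. inner x (c *\<^sub>C y) = c *\<^sub>C inner x y"
  using assms unfolding hilbert_module_def by (elim conjE) assumption

lemma hm_ir:
  assumes "hilbert_module M ract inner"
  shows "\<forall>x\<in>M. \<forall>y\<in>M. \<forall>a. inner x (ract y a) = inner x y * a"
  using assms unfolding hilbert_module_def by (elim conjE) assumption

lemma hm_sym:
  assumes "hilbert_module M ract inner"
  shows "\<forall>x\<in>M. \<forall>y\<in>M. inner y x = cstar (inner x y)"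
  using assms unfolding hilbert_module_def by (elim conjE) assumption

lemma hm_def:
  assumes "hilbert_module M ract inner"
  shows "\<forall>x\<in>M. inner x x = 0 \<longrightarrow> x = 0"
  using assms unfolding hilbert_module_def by (elim conjE) assumption

lemma corr_hm:
  assumes "correspondence M lact ract inner"
  shows "hilbert_module M ract inner"
  using assms unfolding correspondence_def by (elim conjE) assumption

lemma corr_l:
  assumes "correspondence M lact ract inner"
  shows "\<forall>a. \<forall>x\<in>M. lact a x \<in> M"
  using assms unfolding correspondence_def by (elim conjE) assumption

lemma corr_adj:
  assumes "correspondence M lact ract inner"
  shows "\<forall>a. \<forall>x\<in>M. \<forall>y\<in>M. inner (lact a x) y = inner x (lact (cstar a) y)"
  using assms unfolding correspondence_def by (elim conjE) assumption

lemma corr_mul: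
  assumes "correspondence M lact ract inner"
  shows "\<forall>a b. \<forall>x\<in>M. lact (a * b) x = lact a (lact b x)"
  using assms unfolding correspondence_def by (elim conjE) assumption

lemma ps_corr:
  assumes "product_system X emb lact ract inner mult"
  shows "\<forall>n. correspondence (X n) lact ract inner"
  using assms unfolding product_system_def by (elim conjE) assumption

lemma ps_bij:
  assumes "product_system X emb lact ract inner mult"
  shows "bij_betw emb UNIV (X zvec)"
  using assms unfolding product_system_def by (elim conjE) assumption

lemma ps_inner:
  assumes "product_system X emb lact ract inner mult"
  shows "\<forall>a b. inner (emb a) (emb b) = cstar a * b"
  using assms unfolding product_system_def by (elim conjE) assumption

lemma ps_lact:
  assumes "product_system X emb lact ract inner mult"
  shows "\<forall>a b. lact a (emb b) = emb (a * b)"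
  using assms unfolding product_system_def by (elim conjE) assumption

lemma ps_mult:
  assumes "product_system X emb lact ract inner mult"
  shows "\<forall>n m. \<forall>\<xi>\<in>X n. \<forall>\<eta>\<in>X m. mult \<xi> \<eta> \<in> X (\<lambda>i. n i + m i)"
  using assms unfolding product_system_def by (elim conjE) assumption

lemma ps_nz:
  assumes "product_system X emb lact ract inner mult"
  shows "\<forall>n m. n \<noteq> zvec \<and> m \<noteq> zvec \<longrightarrow>
        (\<forall>\<xi>\<in>X n. \<forall>\<xi>'\<in>X n. \<forall>\<eta>\<in>X m. mult (\<xi> + \<xi>') \<eta> = mult \<xi> \<eta> + mult \<xi>' \<eta>) \<and>
        (\<forall>\<xi>\<in>X n. \<forall>\<eta>\<in>X m. \<forall>\<eta>'\<in>X m. mult \<xi> (\<eta> + \<eta>') = mult \<xi> \<eta> + mult \<xi> \<eta>') \<and>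
        (\<forall>\<xi>\<in>X n. \<forall>\<eta>\<in>X m. \<forall>c. mult (c *\<^sub>C \<xi>) \<eta> = c *\<^sub>C mult \<xi> \<eta> \<and> mult \<xi> (c *\<^sub>C \<eta>) = c *\<^sub>C mult \<xi> \<eta>) \<and>
        (\<forall>\<xi>\<in>X n. \<forall>\<eta>\<in>X m. \<forall>a. mult (ract \<xi> a) \<eta> = mult \<xi> (lact a \<eta>)) \<and>
        (\<forall>\<xi>\<in>X n. \<forall>\<eta>\<in>X m. \<forall>a. mult \<xi> (ract \<eta> a) = ract (mult \<xi> \<eta>) a) \<and>
        (\<forall>\<xi>\<in>X n. \<forall>\<eta>\<in>X m. \<forall>a. lact a (mult \<xi> \<eta>) = mult (lact a \<xi>) \<eta>) \<and>
        (\<forall>\<xi>\<in>X n. \<forall>\<xi>'\<in>X n. \<forall>\<eta>\<in>X m. \<forall>\<eta>'\<in>X m.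
            inner (mult \<xi> \<eta>) (mult \<xi>' \<eta>') = inner \<eta> (lact (inner \<xi> \<xi>') \<eta>')) \<and>
        (\<forall>\<zeta>\<in>X (\<lambda>i. n i + m i). \<forall>\<epsilon>>0. \<exists>ps. set ps \<subseteq> X n \<times> X m \<and>
            xnorm inner (\<zeta> - sum_list (map (\<lambda>(\<xi>, \<eta>). mult \<xi> \<eta>) ps)) < \<epsilon>)"
  using assms unfolding product_system_def by (elim conjE) assumption

lemma hm_diff:
  assumes h: "hilbert_module M ract inner" and "x \<in> M" "y \<in> M"
  shows "x - y \<in> M"
proof -
  have "(-1::complex) *\<^sub>C y \<in> M" using hm_sc[OF h] assms(3) by blast
  hence "x + (-1::complex) *\<^sub>C y \<in> M" using hm_add[OF h] assms(2) by blast
  thus ?thesis by (simp add: scaleC_minus_one')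
qed

lemma hm_inner_diff:
  assumes h: "hilbert_module M ract inner" and "z \<in> M" "x \<in> M" "y \<in> M"
  shows "inner z (x - y) = inner z x - inner z y"
proof -
  have m: "(-1::complex) *\<^sub>C y \<in> M" using hm_sc[OF h] assms(4) by blast
  have "inner z (x + (-1::complex) *\<^sub>C y) = inner z x + inner z ((-1::complex) *\<^sub>C y)"
    using hm_iadd[OF h] assms m by blast
  also have "inner z ((-1::complex) *\<^sub>C y) = (-1::complex) *\<^sub>C inner z y"
    using hm_isc[OF h] assms by blast
  finally show ?thesis by (simp add: scaleC_minus_one')
qed

lemma corr_lact_ract:
  assumes c: "correspondence M lact ract inner" and e: "\<eta> \<in> M"
  shows "lact a (ract \<eta> v) = ract (lact a \<eta>) v"
proof -
  have h: "hilbert_module M ract inner" using corr_hm[OF c] .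
  have rv: "ract \<eta> v \<in> M" using hm_r[OF h] e by blast
  have l1: "lact a (ract \<eta> v) \<in> M" using corr_l[OF c] rv by blast
  have la: "lact a \<eta> \<in> M" using corr_l[OF c] e by blast
  have l2: "ract (lact a \<eta>) v \<in> M" using hm_r[OF h] la by blast
  define d where "d = lact a (ract \<eta> v) - ract (lact a \<eta>) v"
  have dM: "d \<in> M" using hm_diff[OF h l1 l2] d_def by simp
  have lsd: "lact (cstar a) d \<in> M" using corr_l[OF c] dM by blast
  have adj: "\<And>b x y. x \<in> M \<Longrightarrow> y \<in> M \<Longrightarrow> inner (lact b x) y = inner x (lact (cstar b) y)"
    using corr_adj[OF c] by blast
  have rin: "\<And>x y b. x \<in> M \<Longrightarrow> y \<in> M \<Longrightarrow> inner x (ract y b) = inner x y * b"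
    using hm_ir[OF h] by blast
  have "inner d (lact a (ract \<eta> v)) = inner (lact (cstar a) d) (ract \<eta> v)"
    using adj[OF dM rv, of "cstar a"] by (simp add: cstar_cstar)
  also have "\<dots> = inner (lact (cstar a) d) \<eta> * v" using rin[OF lsd e] .
  also have "inner (lact (cstar a) d) \<eta> = inner d (lact a \<eta>)"
    using adj[OF dM e, of "cstar a"] by (simp add: cstar_cstar)
  finally have 1: "inner d (lact a (ract \<eta> v)) = inner d (lact a \<eta>) * v" .
  have 2: "inner d (ract (lact a \<eta>) v) = inner d (lact a \<eta>) * v" using rin[OF dM la] .
  have "inner d d = 0" using hm_inner_diff[OF h dM l1 l2] 1 2 d_def by simp
  hence "d = 0" using hm_def[OF h] dM by blast
  thus ?thesis unfolding d_def by simp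
qed

theorem proposition2p7:
  fixes X :: "('i::finite \<Rightarrow> nat) \<Rightarrow> 'x::cvector set"
    and emb :: "'a::cstar_algebra \<Rightarrow> 'x"
    and lact :: "'a \<Rightarrow> 'x \<Rightarrow> 'x"
    and ract :: "'x \<Rightarrow> 'a \<Rightarrow> 'x"
    and inner :: "'x \<Rightarrow> 'x \<Rightarrow> 'a"
    and mult :: "'x \<Rightarrow> 'x \<Rightarrow> 'x"
    and F :: "'i set"
  assumes "product_system X emb lact ract inner mult"
    and "F \<noteq> {}"
    and "a \<in> I_ideal X lact ract inner F"
    and "\<forall>i\<in>F. m i = 0"
    and "\<xi> \<in> X m" and "\<eta> \<in> X m"
  shows "inner \<xi> (lact a \<eta>) \<in> I_ideal X lact ract inner F"
proof -
  note ps = assms(1)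
  define J where "J = J_ideal X lact ract inner F"
  have aI: "\<And>m' x y. \<forall>i\<in>F. m' i = 0 \<Longrightarrow> x \<in> X m' \<Longrightarrow> y \<in> X m' \<Longrightarrow> inner x (lact a y) \<in> J"
    using assms(3) unfolding I_ideal_def J_def by blast
  define b where "b = inner \<xi> (lact a \<eta>)"
  have corr: "\<And>n. correspondence (X n) lact ract inner" using ps_corr[OF ps] by blast
  have hm: "\<And>n. hilbert_module (X n) ract inner" using corr_hm[OF corr] .
  have bij: "bij_betw emb UNIV (X zvec)" using ps_bij[OF ps] .
  have embS: "\<And>z. z \<in> X zvec \<Longrightarrow> \<exists>u. z = emb u" using bij unfolding bij_betw_def by blast
  have inner_emb: "\<And>u v. inner (emb u) (emb v) = cstar u * v" using ps_inner[OF ps] by blast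
  have lact_emb: "\<And>u v. lact u (emb v) = emb (u * v)" using ps_lact[OF ps] by blast
  have adj: "\<And>n c x y. x \<in> X n \<Longrightarrow> y \<in> X n \<Longrightarrow> inner (lact c x) y = inner x (lact (cstar c) y)"
    using corr_adj[OF corr] by blast
  have lmul: "\<And>n c d x. x \<in> X n \<Longrightarrow> lact (c * d) x = lact c (lact d x)"
    using corr_mul[OF corr] by blast
  have lX: "\<And>n c x. x \<in> X n \<Longrightarrow> lact c x \<in> X n"
    using corr_l[OF corr] by blast
  have rX: "\<And>n c x. x \<in> X n \<Longrightarrow> ract x c \<in> X n"
    using hm_r[OF hm] by blast
  have rin: "\<And>n x y c. x \<in> X n \<Longrightarrow> y \<in> X n \<Longrightarrow> inner x (ract y c) = inner x y * c"
    using hm_ir[OF hm] by blast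
  have sym: "\<And>n x y. x \<in> X n \<Longrightarrow> y \<in> X n \<Longrightarrow> inner y x = cstar (inner x y)"
    using hm_sym[OF hm] by blast
  have bJ: "b \<in> J" unfolding b_def using aI[OF assms(4-6)] .
  have main: "inner \<zeta> (lact b \<zeta>') \<in> J"
    if m': "\<forall>i\<in>F. m' i = 0" and z: "\<zeta> \<in> X m'" and z': "\<zeta>' \<in> X m'" for m' \<zeta> \<zeta>'
  proof (cases "m = zvec")
    case True
    then obtain x y where xy: "\<xi> = emb x" "\<eta> = emb y" using embS assms(5,6) by blast
    have bb: "b = cstar x * (a * y)" unfolding b_def xy lact_emb inner_emb ..
    have "lact b \<zeta>' = lact (cstar x) (lact (a * y) \<zeta>')" unfolding bb using lmul[OF z'] .
    also have "lact (a * y) \<zeta>' = lact a (lact y \<zeta>')" using lmul[OF z'] .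
    finally have "inner \<zeta> (lact b \<zeta>') = inner \<zeta> (lact (cstar x) (lact a (lact y \<zeta>')))" by simp
    also have "\<dots> = inner (lact x \<zeta>) (lact a (lact y \<zeta>'))"
      using adj[OF z lX[OF lX[OF z']]] by simp
    finally show ?thesis using aI[OF m' lX[OF z] lX[OF z']] by simp
  next
    case mnz: False
    show ?thesis
    proof (cases "m' = zvec")
      case True
      then obtain u v where uv: "\<zeta> = emb u" "\<zeta>' = emb v" using embS z z' by blast
      have "inner \<zeta> (lact b \<zeta>') = cstar u * (b * v)" unfolding uv lact_emb inner_emb ..
      also have "\<dots> = inner (ract \<xi> u) (lact a (ract \<eta> v))"
      proof -
        have la: "lact a \<eta> \<in> X m" using lX assms(6) .
        have "inner (ract \<xi> u) (lact a (ract \<eta> v)) = inner (ract \<xi> u) (ract (lact a \<eta>) v)"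
          using corr_lact_ract[OF corr assms(6)] by simp
        also have "\<dots> = inner (ract \<xi> u) (lact a \<eta>) * v" using rin[OF rX[OF assms(5)] la] .
        also have "inner (ract \<xi> u) (lact a \<eta>) = cstar (inner (lact a \<eta>) (ract \<xi> u))"
          using sym[OF la rX[OF assms(5)]] .
        also have "\<dots> = cstar (inner (lact a \<eta>) \<xi> * u)" using rin[OF la assms(5)] by simp
        also have "\<dots> = cstar u * b"
          unfolding b_def using sym[OF la assms(5)] by (simp add: cstar_mult cstar_cstar)
        finally show ?thesis by (simp add: mult.assoc)
      qed
      finally show ?thesis using aI[OF assms(4) rX[OF assms(5)] rX[OF assms(6)]] by simp
    next
      case False
      note PP = ps_nz[OF ps, THEN spec[of _ m], THEN spec[of _ m'], THEN mp, OF conjI[OF mnz False]]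
      have Q1: "\<forall>\<xi>\<in>X m. \<forall>\<eta>\<in>X m'. \<forall>c. lact c (mult \<xi> \<eta>) = mult (lact c \<xi>) \<eta>"
        using PP by (elim conjE) assumption
      have Q2: "\<forall>\<xi>\<in>X m. \<forall>\<xi>'\<in>X m. \<forall>\<eta>\<in>X m'. \<forall>\<eta>'\<in>X m'.
            inner (mult \<xi> \<eta>) (mult \<xi>' \<eta>') = inner \<eta> (lact (inner \<xi> \<xi>') \<eta>')"
        using PP by (elim conjE) assumption
      have P: "(\<forall>\<xi>\<in>X m. \<forall>\<eta>\<in>X m'. \<forall>c. lact c (mult \<xi> \<eta>) = mult (lact c \<xi>) \<eta>) \<and>
        (\<forall>\<xi>\<in>X m. \<forall>\<xi>'\<in>X m. \<forall>\<eta>\<in>X m'. \<forall>\<eta>'\<in>X m'.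
            inner (mult \<xi> \<eta>) (mult \<xi>' \<eta>') = inner \<eta> (lact (inner \<xi> \<xi>') \<eta>'))"
        using Q1 Q2 by (rule conjI)
      have mX: "\<And>n k x y. x \<in> X n \<Longrightarrow> y \<in> X k \<Longrightarrow> mult x y \<in> X (\<lambda>i. n i + k i)"
        using ps_mult[OF ps] by blast
      have la: "lact a \<eta> \<in> X m" using lX assms(6) .
      have P1: "lact a (mult \<eta> \<zeta>') = mult (lact a \<eta>) \<zeta>'"
        using P assms(6) z' by blast
      have P2: "inner (mult \<xi> \<zeta>) (mult (lact a \<eta>) \<zeta>') = inner \<zeta> (lact b \<zeta>')"
        unfolding b_def using P assms(5) la z z' by blast
      have "inner \<zeta> (lact b \<zeta>') = inner (mult \<xi> \<zeta>) (lact a (mult \<eta> \<zeta>'))"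
        using P1 P2 by simp
      thus ?thesis
        using aI[of "\<lambda>i. m i + m' i", OF _ mX[OF assms(5) z] mX[OF assms(6) z']] assms(4) m' by simp
    qed
  qed
  show ?thesis using bJ main unfolding I_ideal_def J_def b_def by blast
qed

end
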